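(* Let $\Gamma_0$ be a normal system with entropy $S$, and let $\Gamma$ be a further state space such that $\prec$ is defined on $\Gamma$, on $\Gamma\times\Gamma_0$ and on multiple products of these spaces, satisfying (A1), (A2), (A3), (A6) and the cancellation law (comparability (B2) is NOT assumed). Fix reference states $Z_0\in\Gamma_0$, $X_1\in\Gamma$ and assume (B1): for every $X\in\Gamma$ there exist $Z',Z''\in\Gamma_0$ with $(X_1,Z')\prec(X,Z_0)\prec(X_1,Z'')$. For $X\in\Gamma$ define $$S_-(X)=\sup\{S(Z')\,:\,Z'\in\Gamma_0,\ (X_1,Z')\prec(X,Z_0)\},\qquad S_+(X)=\inf\{S(Z'')\,:\,Z''\in\Gamma_0,\ (X,Z_0)\prec(X_1,Z'')\}.$$ Then: (1) For $X,Y\in\Gamma$, $X\prec Y$ implies $S_-(X)\le S_-(Y)$ and $S_+(X)\le S_+(Y)$. (2) For $X,Y\in\Gamma$, if $S_+(X)\le S_-(Y)$ then $X\prec Y$. (3) Define $S_\pm$ on $\Gamma\times\Gamma$ analogously, using $\Gamma_0\times\Gamma_0$ (with entropy $S(Z,W)=S(Z)+S(W)$) as entropy meter and $(X_1,X_1)\in\Gamma\times\Gamma$, $(Z_0,Z_0)\in\Gamma_0\times\Gamma_0$ as reference points, i.e. $S_-(X,Y)=\sup\{S(Z')+S(W')\,:\,(X_1,X_1,Z',W')\prec(X,Y,Z_0,Z_0)\}$ and $S_+(X,Y)=\inf\{S(Z'')+S(W'')\,:\,(X,Y,Z_0,Z_0)\prec(X_1,X_1,Z'',W'')\}$. Then for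 all $X,Y\in\Gamma$, $$S_-(X)+S_-(Y)\le S_-(X,Y)\le S_+(X,Y)\le S_+(X)+S_+(Y).$$ (4) Define $S_\pm$ on $\Gamma\times\Gamma_0$ analogously, using $\Gamma_0$ as entropy meter and $(X_1,Z_0)\in\Gamma\times\Gamma_0$, $Z_0\in\Gamma_0$ as reference points, i.e. $S_-(X,Z)=\sup\{S(Z')\,:\,(X_1,Z_0,Z')\prec(X,Z,Z_0)\}$ and $S_+(X,Z)=\inf\{S(Z'')\,:\,(X,Z,Z_0)\prec(X_1,Z_0,Z'')\}$. Then $S_\pm(X,Z_0)=S_\pm(X)$ for $X\in\Gamma$ and $S_\pm(X_1,Z)=S(Z)$ for $Z\in\Gamma_0$. Moreover, if $\hat S$ is any function on $\Gamma\times\Gamma_0$ that is monotone with respect to $\prec$ (i.e. $A\prec B$ implies $\hat S(A)\le\hat S(B)$) and satisfies $\hat S(X_1,Z)=S(Z)$ for all $Z\in\Gamma_0$, then $S_-(X)\le\hat S(X,Z_0)\le S_+(X)$ for all $X\in\Gamma$.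
   Context: Setting (axiomatic thermodynamics via adiabatic accessibility). States belong to state spaces; for states $X,Y$ (possibly in different spaces) $X\prec Y$ means $Y$ can be reached from $X$ by an adiabatic process; $X\sim_A Y$ means $X\prec Y$ and $Y\prec X$. For state spaces $\Gamma_1,\Gamma_2$ the product $\Gamma_1\times\Gamma_2$ consists of pairs $(X_1,X_2)$; multiple products are formed likewise, and $(X,Y,Z,W)$ denotes a state of a fourfold product. For a scalable space, $\lambda X$ ($\lambda>0$) denotes a scaled state. Assumptions on $\prec$: (A1) Reflexivity: $X\sim_A X$. (A2) Transitivity: $X\prec Y$, $Y\prec Z$ imply $X\prec Z$. (A3) Consistency: $X\prec X'$ and $Y\prec Y'$ imply $(X,Y)\prec(X',Y')$. (A6) Stability with respect to $\Gamma_0$: if $(X,\varepsilon Z_0)\prec(Y,\varepsilon Z_1)$ with $Z_0,Z_1\in\Gamma_0$ for a sequence of $\varepsilon>0$ tending to zero, then $X\prec Y$. Cancellation law: $(X_1,X_2)\prec(X_1,Y_2)$ implies $X_2\prec Y_2$. A normal system $\Gamma_0$ is a state space of equilibrium states on which scaling is defined, equipped with an additive and extensive entropy function $S:\Gamma_0\to\mathbb R$ ($S(\lambda Z)=\lambda S(Z)$, $S$ additive on products of scaled copies) which characterizes $\prec$: for two states in the same product of scaled copies of $\Gamma_0$, one precedes the other iff its entropy is $\le$ that of the other; moreover the range of $S$ is connected (if $S(X)<S(Y)$, every value in $[S(X),S(Y)]$ is attained by $S$ on $\Gamma_0$). Scaling is not assumed to be defined on $\Gamma$. *)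

theory Defs
  imports Complex_Main "HOL-Library.Multiset"
begin

text \<open>An atom is either a state of the system Gamma (type 'g)
  or a scaled copy l Z of a state Z of the normal system Gamma0 (type 'z, l > 0).
  A compound state (a state of a product of these spaces) is a finite nonempty
  multiset of atoms; multisets encode the standard identification of products up
  to reordering and rebracketing.\<close>

datatype ('g, 'z) atom = G 'g | N real 'z

type_synonym ('g, 'z) state = "('g, 'z) atom multiset"

datatype space_label = Gamma_sp | Scaled_sp real

fun atom_space :: "('g, 'z) atom \<Rightarrow> space_label" where
  "atom_space (G g) = Gamma_sp"
| "atom_space (N l z) = Scaled_sp l"

definition space :: "('g, 'z) state \<Rightarrow> space_label multiset" where
  "space A = image_mset atom_space A"

definition valid_state :: "('g, 'z) state \<Rightarrow> bool" where
  "valid_state A \<longleftrightarrow> A \<noteq> {#} \<and> (\<forall>a\<in>#A. case a of G g \<Rightarrow> True | N l z \<Rightarrow> l > 0)"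

definition pure0 :: "('g, 'z) state \<Rightarrow> bool" where
  "pure0 A \<longleftrightarrow> (\<forall>a\<in>#A. \<exists>l z. a = N l z)"

definition ent0 :: "('z \<Rightarrow> real) \<Rightarrow> ('g, 'z) state \<Rightarrow> real" where
  "ent0 S A = (\<Sum>a\<in>#A. case a of G g \<Rightarrow> 0 | N l z \<Rightarrow> l * S z)"

definition A1 :: "(('g,'z) state \<Rightarrow> ('g,'z) state \<Rightarrow> bool) \<Rightarrow> bool" where
  "A1 prec \<longleftrightarrow> (\<forall>X. valid_state X \<longrightarrow> prec X X)"

definition A2 :: "(('g,'z) state \<Rightarrow> ('g,'z) state \<Rightarrow> bool) \<Rightarrow> bool" where
  "A2 prec \<longleftrightarrow> (\<forall>X Y Z. valid_state X \<and> valid_state Y \<and> valid_state Z \<and>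
      prec X Y \<and> prec Y Z \<longrightarrow> prec X Z)"

definition A3 :: "(('g,'z) state \<Rightarrow> ('g,'z) state \<Rightarrow> bool) \<Rightarrow> bool" where
  "A3 prec \<longleftrightarrow> (\<forall>X X' Y Y'. valid_state X \<and> valid_state X' \<and> valid_state Y \<and> valid_state Y' \<and>
      prec X X' \<and> prec Y Y' \<longrightarrow> prec (X + Y) (X' + Y'))"

definition A6 :: "(('g,'z) state \<Rightarrow> ('g,'z) state \<Rightarrow> bool) \<Rightarrow> bool" where
  "A6 prec \<longleftrightarrow> (\<forall>X Y Z0 Z1. valid_state X \<and> valid_state Y \<and>
      (\<forall>\<delta>>0. \<exists>\<epsilon>. 0 < \<epsilon> \<and> \<epsilon> < \<delta> \<and> prec (X + {#N \<epsilon> Z0#}) (Y + {#N \<epsilon> Z1#}))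
      \<longrightarrow> prec X Y)"

definition cancellation :: "(('g,'z) state \<Rightarrow> ('g,'z) state \<Rightarrow> bool) \<Rightarrow> bool" where
  "cancellation prec \<longleftrightarrow> (\<forall>X1 X2 Y2. valid_state X1 \<and> valid_state X2 \<and> valid_state Y2 \<and>
      prec (X1 + X2) (X1 + Y2) \<longrightarrow> prec X2 Y2)"

definition normal_system :: "(('g,'z) state \<Rightarrow> ('g,'z) state \<Rightarrow> bool) \<Rightarrow> ('z \<Rightarrow> real) \<Rightarrow> bool" where
  "normal_system prec S \<longleftrightarrow>
     (\<forall>A B. valid_state A \<and> valid_state B \<and> pure0 A \<and> pure0 B \<and> space A = space B \<longrightarrow>
        (prec A B \<longleftrightarrow> ent0 S A \<le> ent0 S B)) \<and>
     (\<forall>X Y t. S X < S Y \<and> S X \<le> t \<and> t \<le> S Y \<longrightarrow> (\<exists>Z. S Z = t))"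

definition Sminus where
  "Sminus prec S X1 Z0 X = Sup {S Z' | Z'. prec {#G X1, N 1 Z'#} {#G X, N 1 Z0#}}"
definition Splus where
  "Splus prec S X1 Z0 X = Inf {S Z'' | Z''. prec {#G X, N 1 Z0#} {#G X1, N 1 Z''#}}"

definition Sminus2 where
  "Sminus2 prec S X1 Z0 X Y = Sup {S Z' + S W' | Z' W'.
      prec {#G X1, G X1, N 1 Z', N 1 W'#} {#G X, G Y, N 1 Z0, N 1 Z0#}}"
definition Splus2 where
  "Splus2 prec S X1 Z0 X Y = Inf {S Z'' + S W'' | Z'' W''.
      prec {#G X, G Y, N 1 Z0, N 1 Z0#} {#G X1, G X1, N 1 Z'', N 1 W''#}}"

definition SminusC where
  "SminusC prec S X1 Z0 X Z = Sup {S Z' | Z'. prec {#G X1, N 1 Z0, N 1 Z'#} {#G X, N 1 Z, N 1 Z0#}}"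
definition SplusC where
  "SplusC prec S X1 Z0 X Z = Inf {S Z'' | Z''. prec {#G X, N 1 Z, N 1 Z0#} {#G X1, N 1 Z0, N 1 Z''#}}"

end

theory Submission
  imports Defs
begin

lemma A6_use: "A6 prec \<Longrightarrow> valid_state X \<Longrightarrow> valid_state Y \<Longrightarrow>
  (\<forall>\<delta>>0. \<exists>\<epsilon>. 0<\<epsilon> \<and> \<epsilon><\<delta> \<and> prec (X + {#N \<epsilon> Z0#}) (Y + {#N \<epsilon> Z1#})) \<Longrightarrow> prec X Y"
  unfolding A6_def by blast

declare add_mset_commute[simp]

theorem proposition1:
  fixes prec :: "('g, 'z) state \<Rightarrow> ('g, 'z) state \<Rightarrow> bool"
    and S :: "'z \<Rightarrow> real" and X1 :: 'g and Z0 :: 'z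
  assumes "normal_system prec S"
    and "A1 prec" and "A2 prec" and "A3 prec" and "A6 prec" and "cancellation prec"
    and B1: "\<forall>X. \<exists>Z' Z''. prec {#G X1, N 1 Z'#} {#G X, N 1 Z0#} \<and>
                          prec {#G X, N 1 Z0#} {#G X1, N 1 Z''#}"
  shows "(\<forall>X Y. prec {#G X#} {#G Y#} \<longrightarrow>
            Sminus prec S X1 Z0 X \<le> Sminus prec S X1 Z0 Y \<and>
            Splus prec S X1 Z0 X \<le> Splus prec S X1 Z0 Y)
       \<and> (\<forall>X Y. Splus prec S X1 Z0 X \<le> Sminus prec S X1 Z0 Y \<longrightarrow> prec {#G X#} {#G Y#})
       \<and> (\<forall>X Y. Sminus prec S X1 Z0 X + Sminus prec S X1 Z0 Y \<le> Sminus2 prec S X1 Z0 X Y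
              \<and> Sminus2 prec S X1 Z0 X Y \<le> Splus2 prec S X1 Z0 X Y
              \<and> Splus2 prec S X1 Z0 X Y \<le> Splus prec S X1 Z0 X + Splus prec S X1 Z0 Y)
       \<and> (\<forall>X. SminusC prec S X1 Z0 X Z0 = Sminus prec S X1 Z0 X
              \<and> SplusC prec S X1 Z0 X Z0 = Splus prec S X1 Z0 X)
       \<and> (\<forall>Z. SminusC prec S X1 Z0 X1 Z = S Z \<and> SplusC prec S X1 Z0 X1 Z = S Z)
       \<and> (\<forall>Shat :: 'g \<Rightarrow> 'z \<Rightarrow> real.
            (\<forall>X Z Y W. prec {#G X, N 1 Z#} {#G Y, N 1 W#} \<longrightarrow> Shat X Z \<le> Shat Y W)
            \<and> (\<forall>Z. Shat X1 Z = S Z)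
            \<longrightarrow> (\<forall>X. Sminus prec S X1 Z0 X \<le> Shat X Z0 \<and> Shat X Z0 \<le> Splus prec S X1 Z0 X))"
proof -
  note ax = assms(1-6)
  have vs[simp]: "valid_state {#G X, N 1 Z#}" "valid_state {#G X#}" "valid_state {#N 1 Z#}"
     "valid_state {#N 1 Z, N 1 W#}" "valid_state {#G X, N 1 Z, N 1 W#}"
     "valid_state {#G X, G Y, N 1 Z, N 1 W#}" for X Y Z W
    by (simp_all add: valid_state_def)
  have vse: "valid_state {#N e W#}" "valid_state {#G X, N 1 Z, N e W#}" "valid_state {#G X, N e W#}"
     "valid_state {#N 1 Z, N e W#}" if "e > 0" for X Z W e
    using that by (simp_all add: valid_state_def)
  have tr: "prec a c" if "prec a b" "prec b c" "valid_state a" "valid_state b" "valid_state c" for a b c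
    using ax(3) that unfolding A2_def by blast
  have cn: "prec b c" if "prec (a+b) (a+c)" "valid_state a" "valid_state b" "valid_state c" for a b c
    using ax(6) that unfolding cancellation_def by blast
  have cs: "prec (a+b) (c+d)" if "prec a c" "prec b d" "valid_state a" "valid_state b"
      "valid_state c" "valid_state d" for a b c d
    using ax(4) that unfolding A3_def by blast
  have rf: "prec a a" if "valid_state a" for a
    using ax(2) that unfolding A1_def by blast
  have nsys: "prec A B \<longleftrightarrow> ent0 S A \<le> ent0 S B" if "valid_state A" "valid_state B" "pure0 A" "pure0 B"
      "space A = space B" for A B
    using ax(1) that unfolding normal_system_def by blast
  have ns1: "prec {#N 1 a#} {#N 1 b#} \<longleftrightarrow> S a \<le> S b" for a b
    by (subst nsys) (simp_all add: space_def pure0_def ent0_def)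
  have ns2: "prec {#N 1 a, N 1 b#} {#N 1 c, N 1 d#} \<longleftrightarrow> S a + S b \<le> S c + S d" for a b c d
    by (subst nsys) (simp_all add: space_def pure0_def ent0_def)
  have nse: "prec {#N 1 a, N e b#} {#N 1 c, N e d#} \<longleftrightarrow> S a + e * S b \<le> S c + e * S d"
    if "e > 0" for a b c d e
    using that by (subst nsys) (simp_all add: space_def pure0_def ent0_def valid_state_def)
  define Lm where "Lm X = {S Z' | Z'. prec {#G X1, N 1 Z'#} {#G X, N 1 Z0#}}" for X
  define Up where "Up X = {S Z'' | Z''. prec {#G X, N 1 Z0#} {#G X1, N 1 Z''#}}" for X
  have SmL: "Sminus prec S X1 Z0 X = Sup (Lm X)" for X unfolding Sminus_def Lm_def by simp
  have SpU: "Splus prec S X1 Z0 X = Inf (Up X)" for X unfolding Splus_def Up_def by simp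
  have Lne: "Lm X \<noteq> {}" for X using B1 unfolding Lm_def by blast
  have Une: "Up X \<noteq> {}" for X using B1 unfolding Up_def by blast
  have LU0: "S Z' \<le> S Z''" if "prec {#G X1, N 1 Z'#} {#G X, N 1 Z0#}"
      "prec {#G X, N 1 Z0#} {#G X1, N 1 Z''#}" for X Z' Z''
  proof -
    have "prec {#G X1, N 1 Z'#} {#G X1, N 1 Z''#}" using tr that by simp
    then have "prec ({#G X1#} + {#N 1 Z'#}) ({#G X1#} + {#N 1 Z''#})" by simp
    from cn[OF this] have "prec {#N 1 Z'#} {#N 1 Z''#}" by simp
    then show ?thesis using ns1 by simp
  qed
  have LU: "a \<le> b" if "a \<in> Lm X" "b \<in> Up X" for a b X
    using that LU0 unfolding Lm_def Up_def by blast
  have bL: "bdd_above (Lm X)" for X using LU Une unfolding bdd_above_def by blast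
  have bU: "bdd_below (Up X)" for X using LU Lne unfolding bdd_below_def by blast
  have P1: "\<forall>X Y. prec {#G X#} {#G Y#} \<longrightarrow>
            Sminus prec S X1 Z0 X \<le> Sminus prec S X1 Z0 Y \<and>
            Splus prec S X1 Z0 X \<le> Splus prec S X1 Z0 Y"
  proof (intro allI impI)
    fix X Y assume h: "prec {#G X#} {#G Y#}"
    have "prec ({#G X#} + {#N 1 Z0#}) ({#G Y#} + {#N 1 Z0#})"
      by (rule cs[OF h rf]) simp_all
    then have hh: "prec {#G X, N 1 Z0#} {#G Y, N 1 Z0#}" by simp
    have "Lm X \<subseteq> Lm Y" unfolding Lm_def using tr[OF _ hh] by auto
    moreover have "Up Y \<subseteq> Up X" unfolding Up_def using tr[OF hh] by auto
    ultimately show "Sminus prec S X1 Z0 X \<le> Sminus prec S X1 Z0 Y \<and>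
            Splus prec S X1 Z0 X \<le> Splus prec S X1 Z0 Y"
      unfolding SmL SpU using cSup_subset_mono[OF Lne bL] cInf_superset_mono[OF Une bU] by blast
  qed
  have P2: "\<forall>X Y. Splus prec S X1 Z0 X \<le> Sminus prec S X1 Z0 Y \<longrightarrow> prec {#G X#} {#G Y#}"
  proof (intro allI impI)
    fix X Y assume h: "Splus prec S X1 Z0 X \<le> Sminus prec S X1 Z0 Y"
    have fin: "prec {#G X#} {#G Y#}" if "prec {#G X, N 1 Z0#} {#G Y, N 1 Z0#}"
    proof -
      have "prec ({#N 1 Z0#} + {#G X#}) ({#N 1 Z0#} + {#G Y#})" using that by (simp add: add_mset_commute)
      from cn[OF this] show ?thesis by simp
    qed
    show "prec {#G X#} {#G Y#}"
    proof (cases "\<exists>Z'' Z'. prec {#G X, N 1 Z0#} {#G X1, N 1 Z''#} \<and> prec {#G X1, N 1 Z'#} {#G Y, N 1 Z0#}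
        \<and> S Z'' \<le> S Z'")
      case True
      then obtain Z'' Z' where a: "prec {#G X, N 1 Z0#} {#G X1, N 1 Z''#}" and
        b: "prec {#G X1, N 1 Z'#} {#G Y, N 1 Z0#}" and c: "S Z'' \<le> S Z'" by blast
      have "prec ({#G X1#} + {#N 1 Z''#}) ({#G X1#} + {#N 1 Z'#})"
        by (rule cs[OF rf]) (simp_all add: ns1 c)
      then have "prec {#G X1, N 1 Z''#} {#G X1, N 1 Z'#}" by simp
      then have "prec {#G X, N 1 Z0#} {#G Y, N 1 Z0#}" using tr a b by (meson vs)
      then show ?thesis by (rule fin)
    next
      case False
      then have F: "S Z' < S Z''" if "prec {#G X, N 1 Z0#} {#G X1, N 1 Z''#}"
        "prec {#G X1, N 1 Z'#} {#G Y, N 1 Z0#}" for Z' Z'' using that by force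
      obtain W0 where w0: "prec {#G X1, N 1 W0#} {#G Y, N 1 Z0#}" using B1 by blast
      obtain W1 where w1: "prec {#G X, N 1 Z0#} {#G X1, N 1 W1#}" using B1 by blast
      define d where "d = S W1 - S W0"
      have dpos: "d > 0" using F[OF w1 w0] d_def by simp
      have A6pre: "\<forall>\<delta>>0. \<exists>\<epsilon>. 0 < \<epsilon> \<and> \<epsilon> < \<delta> \<and> prec ({#G X#} + {#N \<epsilon> W0#}) ({#G Y#} + {#N \<epsilon> W1#})"
        proof (intro allI impI)
          fix \<delta> :: real assume dl: "\<delta> > 0"
          define e where "e = \<delta> / 2"
          have e: "e > 0" "e < \<delta>" using dl e_def by auto
          have ed: "e * d > 0" using e dpos by simp
          have "Inf (Up X) < Inf (Up X) + e * d / 2" using ed by simp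
          then obtain b where bU': "b \<in> Up X" and bl: "b < Inf (Up X) + e * d / 2"
            using cInf_less_iff[OF Une bU] by blast
          have "Sup (Lm Y) - e * d / 2 < Sup (Lm Y)" using ed by simp
          then obtain a where aL: "a \<in> Lm Y" and al: "Sup (Lm Y) - e * d / 2 < a"
            using less_cSup_iff[OF Lne bL] by blast
          obtain Z'' where z2: "b = S Z''" "prec {#G X, N 1 Z0#} {#G X1, N 1 Z''#}" using bU' Up_def by auto
          obtain Z' where z1: "a = S Z'" "prec {#G X1, N 1 Z'#} {#G Y, N 1 Z0#}" using aL Lm_def by auto
          have ineq: "S Z'' + e * S W0 \<le> S Z' + e * S W1"
          proof -
            have "b < a + e * d" using h bl al unfolding SmL SpU by linarith
            then show ?thesis using z1(1) z2(1) unfolding d_def right_diff_distrib by linarith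
          qed
          have s1: "prec ({#G X, N 1 Z0#} + {#N e W0#}) ({#G X1, N 1 Z''#} + {#N e W0#})"
            by (rule cs[OF z2(2) rf]) (simp_all add: vse e)
          have s2: "prec ({#G X1#} + {#N 1 Z'', N e W0#}) ({#G X1#} + {#N 1 Z', N e W1#})"
            by (rule cs[OF rf]) (simp_all add: vse e nse ineq)
          have s3: "prec ({#G X1, N 1 Z'#} + {#N e W1#}) ({#G Y, N 1 Z0#} + {#N e W1#})"
            by (rule cs[OF z1(2) rf]) (simp_all add: vse e)
          have "prec {#G X, N 1 Z0, N e W0#} {#G Y, N 1 Z0, N e W1#}"
          proof -
            have t1: "prec {#G X, N 1 Z0, N e W0#} {#G X1, N 1 Z'', N e W0#}" using s1 by simp
            have t2: "prec {#G X1, N 1 Z'', N e W0#} {#G X1, N 1 Z', N e W1#}" using s2 by simp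
            have t3: "prec {#G X1, N 1 Z', N e W1#} {#G Y, N 1 Z0, N e W1#}" using s3 by simp
            show ?thesis using tr[OF tr[OF t1 t2] t3] by (simp add: vse e)
          qed
          then have "prec ({#N 1 Z0#} + {#G X, N e W0#}) ({#N 1 Z0#} + {#G Y, N e W1#})"
            by (simp add: add_mset_commute)
          from cn[OF this] have "prec {#G X, N e W0#} {#G Y, N e W1#}" by (simp add: vse e)
          then show "\<exists>\<epsilon>. 0 < \<epsilon> \<and> \<epsilon> < \<delta> \<and> prec ({#G X#} + {#N \<epsilon> W0#}) ({#G Y#} + {#N \<epsilon> W1#})"
            using e by auto
        qed
      show ?thesis using A6_use[OF ax(5) vs(2) vs(2)] A6pre by blast
    qed
  qed
  have cc: "prec (C + A) (C + B) \<longleftrightarrow> prec A B" if "valid_state C" "valid_state A" "valid_state B" for A B C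
    using cn[of C A B] cs[OF rf[of C], of A B] that by blast
  define L2 where "L2 X Y = {S Z' + S W' | Z' W'.
      prec {#G X1, G X1, N 1 Z', N 1 W'#} {#G X, G Y, N 1 Z0, N 1 Z0#}}" for X Y
  define U2 where "U2 X Y = {S Z'' + S W'' | Z'' W''.
      prec {#G X, G Y, N 1 Z0, N 1 Z0#} {#G X1, G X1, N 1 Z'', N 1 W''#}}" for X Y
  have P3: "\<forall>X Y. Sminus prec S X1 Z0 X + Sminus prec S X1 Z0 Y \<le> Sminus2 prec S X1 Z0 X Y
              \<and> Sminus2 prec S X1 Z0 X Y \<le> Splus2 prec S X1 Z0 X Y
              \<and> Splus2 prec S X1 Z0 X Y \<le> Splus prec S X1 Z0 X + Splus prec S X1 Z0 Y"
  proof (intro allI)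
    fix X Y
    have S2: "Sminus2 prec S X1 Z0 X Y = Sup (L2 X Y)" unfolding Sminus2_def L2_def by simp
    have P2': "Splus2 prec S X1 Z0 X Y = Inf (U2 X Y)" unfolding Splus2_def U2_def by simp
    have sL: "a + b \<in> L2 X Y" if ha: "a \<in> Lm X" and hb: "b \<in> Lm Y" for a b
    proof -
      obtain Z' where z: "a = S Z'" "prec {#G X1, N 1 Z'#} {#G X, N 1 Z0#}" using ha Lm_def by auto
      obtain W' where w: "b = S W'" "prec {#G X1, N 1 W'#} {#G Y, N 1 Z0#}" using hb Lm_def by auto
      have "prec {#G X1, G X1, N 1 Z', N 1 W'#} {#G X, G Y, N 1 Z0, N 1 Z0#}"
        using cs[OF z(2) w(2)] by simp
      then show ?thesis unfolding L2_def using z w by blast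
    qed
    have sU: "a + b \<in> U2 X Y" if ha: "a \<in> Up X" and hb: "b \<in> Up Y" for a b
    proof -
      obtain Z' where z: "a = S Z'" "prec {#G X, N 1 Z0#} {#G X1, N 1 Z'#}" using ha Up_def by auto
      obtain W' where w: "b = S W'" "prec {#G Y, N 1 Z0#} {#G X1, N 1 W'#}" using hb Up_def by auto
      have "prec {#G X, G Y, N 1 Z0, N 1 Z0#} {#G X1, G X1, N 1 Z', N 1 W'#}"
        using cs[OF z(2) w(2)] by simp
      then show ?thesis unfolding U2_def using z w by blast
    qed
    have LU2: "a \<le> b" if ha: "a \<in> L2 X Y" and hb: "b \<in> U2 X Y" for a b
    proof -
      obtain Z' W' where z: "a = S Z' + S W'"
        "prec {#G X1, G X1, N 1 Z', N 1 W'#} {#G X, G Y, N 1 Z0, N 1 Z0#}" using ha L2_def by auto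
      obtain Z'' W'' where w: "b = S Z'' + S W''"
        "prec {#G X, G Y, N 1 Z0, N 1 Z0#} {#G X1, G X1, N 1 Z'', N 1 W''#}" using hb U2_def by auto
      have "prec {#G X1, G X1, N 1 Z', N 1 W'#} {#G X1, G X1, N 1 Z'', N 1 W''#}"
        using tr[OF z(2) w(2)] by simp
      then have "prec ({#G X1, G X1#} + {#N 1 Z', N 1 W'#}) ({#G X1, G X1#} + {#N 1 Z'', N 1 W''#})" by simp
      then have "prec {#N 1 Z', N 1 W'#} {#N 1 Z'', N 1 W''#}"
        using cc[of "{#G X1, G X1#}"] by (simp add: valid_state_def)
      then show ?thesis using z w ns2 by simp
    qed
    obtain a0 where a0: "a0 \<in> Lm X" using Lne by blast
    obtain b0 where b0: "b0 \<in> Lm Y" using Lne by blast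
    obtain c0 where c0: "c0 \<in> Up X" using Une by blast
    obtain d0 where d0: "d0 \<in> Up Y" using Une by blast
    have L2ne: "L2 X Y \<noteq> {}" using sL[OF a0 b0] by blast
    have U2ne: "U2 X Y \<noteq> {}" using sU[OF c0 d0] by blast
    have bL2: "bdd_above (L2 X Y)" using LU2 U2ne unfolding bdd_above_def by blast
    have bU2: "bdd_below (U2 X Y)" using LU2 L2ne unfolding bdd_below_def by blast
    have i1: "Sup (Lm X) + Sup (Lm Y) \<le> Sup (L2 X Y)"
    proof -
      have "a \<le> Sup (L2 X Y) - Sup (Lm Y)" if "a \<in> Lm X" for a
      proof -
        have "Sup (Lm Y) \<le> Sup (L2 X Y) - a"
          using cSup_upper[OF sL[OF that] bL2] by (intro cSup_least[OF Lne]) (force simp: le_diff_eq add.commute)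
        then show ?thesis by simp
      qed
      then have "Sup (Lm X) \<le> Sup (L2 X Y) - Sup (Lm Y)" by (intro cSup_least[OF Lne]) auto
      then show ?thesis by simp
    qed
    have i2: "Sup (L2 X Y) \<le> Inf (U2 X Y)"
      using LU2 by (intro cSup_least[OF L2ne] cInf_greatest[OF U2ne]) auto
    have i3: "Inf (U2 X Y) \<le> Inf (Up X) + Inf (Up Y)"
    proof -
      have "Inf (U2 X Y) - Inf (Up Y) \<le> a" if "a \<in> Up X" for a
      proof -
        have "Inf (U2 X Y) - a \<le> Inf (Up Y)"
          using cInf_lower[OF sU[OF that] bU2] by (intro cInf_greatest[OF Une]) (force simp: diff_le_eq add.commute)
        then show ?thesis by simp
      qed
      then have "Inf (U2 X Y) - Inf (Up Y) \<le> Inf (Up X)" by (intro cInf_greatest[OF Une]) auto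
      then show ?thesis by simp
    qed
    show "Sminus prec S X1 Z0 X + Sminus prec S X1 Z0 Y \<le> Sminus2 prec S X1 Z0 X Y
              \<and> Sminus2 prec S X1 Z0 X Y \<le> Splus2 prec S X1 Z0 X Y
              \<and> Splus2 prec S X1 Z0 X Y \<le> Splus prec S X1 Z0 X + Splus prec S X1 Z0 Y"
      unfolding SmL SpU S2 P2' using i1 i2 i3 by simp
  qed
  have P4: "\<forall>X. SminusC prec S X1 Z0 X Z0 = Sminus prec S X1 Z0 X
              \<and> SplusC prec S X1 Z0 X Z0 = Splus prec S X1 Z0 X"
  proof
    fix X
    have e1: "prec {#G X1, N 1 Z0, N 1 Z'#} {#G X, N 1 Z0, N 1 Z0#} \<longleftrightarrow> prec {#G X1, N 1 Z'#} {#G X, N 1 Z0#}" for Z'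
      using cc[of "{#N 1 Z0#}" "{#G X1, N 1 Z'#}" "{#G X, N 1 Z0#}"] by simp
    have e2: "prec {#G X, N 1 Z0, N 1 Z0#} {#G X1, N 1 Z0, N 1 Z''#} \<longleftrightarrow> prec {#G X, N 1 Z0#} {#G X1, N 1 Z''#}" for Z''
      using cc[of "{#N 1 Z0#}" "{#G X, N 1 Z0#}" "{#G X1, N 1 Z''#}"] by simp
    show "SminusC prec S X1 Z0 X Z0 = Sminus prec S X1 Z0 X
              \<and> SplusC prec S X1 Z0 X Z0 = Splus prec S X1 Z0 X"
      unfolding SminusC_def SplusC_def Sminus_def Splus_def e1 e2 by simp
  qed
  have P5: "\<forall>Z. SminusC prec S X1 Z0 X1 Z = S Z \<and> SplusC prec S X1 Z0 X1 Z = S Z"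
  proof
    fix Z
    have e1: "prec {#G X1, N 1 Z0, N 1 Z'#} {#G X1, N 1 Z, N 1 Z0#} \<longleftrightarrow> S Z' \<le> S Z" for Z'
      using cc[of "{#G X1, N 1 Z0#}" "{#N 1 Z'#}" "{#N 1 Z#}"] ns1 by (simp add: valid_state_def)
    have e2: "prec {#G X1, N 1 Z, N 1 Z0#} {#G X1, N 1 Z0, N 1 Z''#} \<longleftrightarrow> S Z \<le> S Z''" for Z''
      using cc[of "{#G X1, N 1 Z0#}" "{#N 1 Z#}" "{#N 1 Z''#}"] ns1 by (simp add: valid_state_def)
    have "Sup {S Z' | Z'. S Z' \<le> S Z} = S Z" by (rule cSup_eq_maximum) auto
    moreover have "Inf {S Z' | Z'. S Z \<le> S Z'} = S Z" by (rule cInf_eq_minimum) auto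
    ultimately show "SminusC prec S X1 Z0 X1 Z = S Z \<and> SplusC prec S X1 Z0 X1 Z = S Z"
      unfolding SminusC_def SplusC_def e1 e2 by simp
  qed
  have P6: "\<forall>Shat :: 'g \<Rightarrow> 'z \<Rightarrow> real.
            (\<forall>X Z Y W. prec {#G X, N 1 Z#} {#G Y, N 1 W#} \<longrightarrow> Shat X Z \<le> Shat Y W)
            \<and> (\<forall>Z. Shat X1 Z = S Z)
            \<longrightarrow> (\<forall>X. Sminus prec S X1 Z0 X \<le> Shat X Z0 \<and> Shat X Z0 \<le> Splus prec S X1 Z0 X)"
  proof (intro allI impI)
    fix Shat :: "'g \<Rightarrow> 'z \<Rightarrow> real" and X
    assume h: "(\<forall>X Z Y W. prec {#G X, N 1 Z#} {#G Y, N 1 W#} \<longrightarrow> Shat X Z \<le> Shat Y W)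
            \<and> (\<forall>Z. Shat X1 Z = S Z)"
    have "\<forall>a\<in>Lm X. a \<le> Shat X Z0" unfolding Lm_def using h by force
    moreover have "\<forall>a\<in>Up X. Shat X Z0 \<le> a" unfolding Up_def using h by force
    ultimately show "Sminus prec S X1 Z0 X \<le> Shat X Z0 \<and> Shat X Z0 \<le> Splus prec S X1 Z0 X"
      unfolding SmL SpU using cSup_least[OF Lne] cInf_greatest[OF Une] by blast
  qed
  show ?thesis using P1 P2 P3 P4 P5 P6 by blast
qed

end
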